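(* Let $(X,\sigma)$ be a metric-like space and $f:X\to X$. Suppose there is a subset $Y$ with $f(X)\subseteq Y\subseteq X$ such that $(Y,\sigma)$ is complete, and there exist $k\in[0,1)$ and $\rho\in\Omega$ such that $$\int_0^{\sigma(fx,fy)}\rho(t)\,dt\le k\int_0^{\sigma(x,y)}\rho(t)\,dt\quad\text{for all }x,y\in X.$$ Then $f$ has a unique fixed point.
   Context: $\Omega$ is the set of all maps $\rho:[0,\infty)\to[0,\infty)$ that are Lebesgue-integrable on each compact subset of $[0,\infty)$ and satisfy $\int_0^\varepsilon\rho(t)\,dt>0$ for all $\varepsilon>0$. A metric-like space is a pair $(X,\sigma)$ with $X\neq\emptyset$ and $\sigma:X\times X\to[0,\infty)$ such that for all $x,y,z\in X$: $\sigma(x,y)=0\Rightarrow x=y$; $\sigma(x,y)=\sigma(y,x)$; $\sigma(x,y)\le\sigma(x,z)+\sigma(z,y)$. A sequence $\{x_n\}$ is Cauchy iff $\lim_{n,m\to\infty}\sigma(x_n,x_m)$ exists and is finite. $(Y,\sigma)$ is complete if every Cauchy sequence $\{x_n\}$ in $Y$ has some $x\in Y$ with $\lim_{n,m}\sigma(x_n,x_m)=\sigma(x,x)=\lim_n\sigma(x_n,x)$. *)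

theory Defs
  imports "HOL-Analysis.Analysis"
begin

definition Omega :: "(real \<Rightarrow> real) set" where
  "Omega = {\<rho>. (\<forall>t\<ge>0. \<rho> t \<ge> 0)
               \<and> (\<forall>a\<ge>0. set_integrable lborel {0..a} \<rho>)
               \<and> (\<forall>e>0. (LBINT t=0..e. \<rho> t) > 0)}"

definition metric_like :: "'a set \<Rightarrow> ('a \<Rightarrow> 'a \<Rightarrow> real) \<Rightarrow> bool" where
  "metric_like X \<sigma> \<longleftrightarrow> X \<noteq> {}
     \<and> (\<forall>x\<in>X. \<forall>y\<in>X. \<sigma> x y \<ge> 0)
     \<and> (\<forall>x\<in>X. \<forall>y\<in>X. \<sigma> x y = 0 \<longrightarrow> x = y)
     \<and> (\<forall>x\<in>X. \<forall>y\<in>X. \<sigma> x y = \<sigma> y x)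
     \<and> (\<forall>x\<in>X. \<forall>y\<in>X. \<forall>z\<in>X. \<sigma> x y \<le> \<sigma> x z + \<sigma> z y)"

definition ml_cauchy :: "('a \<Rightarrow> 'a \<Rightarrow> real) \<Rightarrow> (nat \<Rightarrow> 'a) \<Rightarrow> bool" where
  "ml_cauchy \<sigma> x \<longleftrightarrow>
     (\<exists>L. ((\<lambda>(n,m). \<sigma> (x n) (x m)) \<longlongrightarrow> L) (sequentially \<times>\<^sub>F sequentially))"

definition ml_complete :: "'a set \<Rightarrow> ('a \<Rightarrow> 'a \<Rightarrow> real) \<Rightarrow> bool" where
  "ml_complete Y \<sigma> \<longleftrightarrow>
     (\<forall>x. (\<forall>n. x n \<in> Y) \<and> ml_cauchy \<sigma> x \<longrightarrow>
        (\<exists>p\<in>Y. ((\<lambda>(n,m). \<sigma> (x n) (x m)) \<longlongrightarrow> \<sigma> p p) (sequentially \<times>\<^sub>F sequentially)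
               \<and> ((\<lambda>n. \<sigma> (x n) p) \<longlonglongrightarrow> \<sigma> p p)))"

end

theory Submission
  imports Defs
begin

lemma om_int: assumes "\<rho> \<in> Omega" "0 \<le> s" shows "\<rho> integrable_on {0..s}"
  using assms set_borel_integral_eq_integral(1) unfolding Omega_def by blast

lemma om_eq: assumes "\<rho> \<in> Omega" "0 \<le> s" shows "(LBINT t=0..s. \<rho> t) = integral {0..s} \<rho>"
proof -
  have "set_integrable lborel {0..s} \<rho>" using assms unfolding Omega_def by auto
  then show ?thesis using interval_integral_Icc[of 0 s \<rho>] set_borel_integral_eq_integral(2) assms(2)
    by (simp add: zero_ereal_def)
qed

lemma om_nonneg: assumes "\<rho> \<in> Omega" "0 \<le> s" shows "0 \<le> integral {0..s} \<rho>"
  using assms om_int[OF assms] by (intro integral_nonneg) (auto simp: Omega_def)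

lemma om_mono: assumes "\<rho> \<in> Omega" "0 \<le> a" "a \<le> b" shows "integral {0..a} \<rho> \<le> integral {0..b} \<rho>"
  using assms om_int[of \<rho> a] om_int[of \<rho> b] by (intro integral_subset_le) (auto simp: Omega_def)

lemma om_pos: assumes "\<rho> \<in> Omega" "0 < s" shows "0 < integral {0..s} \<rho>"
proof -
  have "0 < interval_lebesgue_integral lborel 0 (ereal s) \<rho>" using assms unfolding Omega_def by auto
  then show ?thesis using om_eq[OF assms(1), of s] assms(2) by simp
qed

lemma om_cont: assumes "\<rho> \<in> Omega" "(u \<longlongrightarrow> l) F" "\<forall>\<^sub>F n in F. 0 \<le> u n" "0 \<le> l"
  shows "((\<lambda>n. integral {0..u n} \<rho>) \<longlongrightarrow> integral {0..l} \<rho>) F"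
proof -
  have c: "continuous_on {0..l+1} (\<lambda>x. integral {0..x} \<rho>)"
    using indefinite_integral_continuous_1 om_int[OF assms(1), of "l+1"] assms(4) by auto
  have "\<forall>\<^sub>F n in F. u n < l + 1" using assms(2) order_tendstoD(2) by fastforce
  then have "\<forall>\<^sub>F n in F. u n \<in> {0..l+1}" using assms(3) by eventually_elim auto
  then show ?thesis using continuous_on_tendsto_compose[OF c assms(2)] assms(4) by auto
qed

lemma om_to0: assumes "\<rho> \<in> Omega" "\<forall>n. 0 \<le> u n" "(\<lambda>n. integral {0..u n} \<rho>) \<longlonglongrightarrow> 0"
  shows "u \<longlonglongrightarrow> 0"
proof (rule order_tendstoI)
  fix e :: real assume "0 < e"
  then have "0 < integral {0..e} \<rho>" using om_pos assms by auto
  then have "\<forall>\<^sub>F n in sequentially. integral {0..u n} \<rho> < integral {0..e} \<rho>"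
    using assms(3) order_tendstoD(2) by blast
  then show "\<forall>\<^sub>F n in sequentially. u n < e"
  proof eventually_elim
    case (elim n) then show ?case using om_mono[OF assms(1), of e "u n"] \<open>0<e\<close> by force
  qed
next
  fix e :: real assume "e < 0" then show "\<forall>\<^sub>F n in sequentially. e < u n" using assms(2)
    by (simp add: less_le_trans)
qed

theorem corollary5:
  fixes X Y :: "'a set" and \<sigma> :: "'a \<Rightarrow> 'a \<Rightarrow> real" and f :: "'a \<Rightarrow> 'a"
    and k :: real and \<rho> :: "real \<Rightarrow> real"
  assumes "metric_like X \<sigma>"
    and "f ` X \<subseteq> Y" and "Y \<subseteq> X"
    and "ml_complete Y \<sigma>"
    and "0 \<le> k" and "k < 1"
    and "\<rho> \<in> Omega"
    and "\<forall>x\<in>X. \<forall>y\<in>X. (LBINT t=0..\<sigma> (f x) (f y). \<rho> t) \<le> k * (LBINT t=0..\<sigma> x y. \<rho> t)"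
  shows "\<exists>!p. p \<in> X \<and> f p = p"
proof -
  define G where "G s = integral {0..s} \<rho>" for s
  have om: "\<rho> \<in> Omega" by fact
  have ne: "X \<noteq> {}" and nn: "\<And>x y. x\<in>X \<Longrightarrow> y\<in>X \<Longrightarrow> 0 \<le> \<sigma> x y"
    and zr: "\<And>x y. x\<in>X \<Longrightarrow> y\<in>X \<Longrightarrow> \<sigma> x y = 0 \<Longrightarrow> x = y"
    and sy: "\<And>x y. x\<in>X \<Longrightarrow> y\<in>X \<Longrightarrow> \<sigma> x y = \<sigma> y x"
    and tr: "\<And>x y z. x\<in>X \<Longrightarrow> y\<in>X \<Longrightarrow> z\<in>X \<Longrightarrow> \<sigma> x y \<le> \<sigma> x z + \<sigma> z y"
    using assms(1) unfolding metric_like_def by auto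
  have fX: "\<And>x. x \<in> X \<Longrightarrow> f x \<in> X" using assms(2,3) by auto
  have contr: "G (\<sigma> (f x) (f y)) \<le> k * G (\<sigma> x y)" if "x \<in> X" "y \<in> X" for x y
    using assms(8) that om_eq[OF om] nn fX unfolding G_def by metis
  have Gnn: "0 \<le> G s" if "0 \<le> s" for s using om_nonneg[OF om that] unfolding G_def .
  have Gmono: "G a \<le> G b" if "0 \<le> a" "a \<le> b" for a b using om_mono[OF om that] unfolding G_def .
  have Gpos: "0 < G s" if "0 < s" for s using om_pos[OF om that] unfolding G_def .
  have G0: "G 0 = 0" unfolding G_def by simp
  have uniq: "p = q" if "p \<in> X" "q \<in> X" "f p = p" "f q = q" for p q
  proof -
    have "G (\<sigma> p q) \<le> k * G (\<sigma> p q)" using contr[OF that(1,2)] that(3,4) by simp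
    moreover have "0 \<le> G (\<sigma> p q)" using Gnn nn that by auto
    ultimately have "G (\<sigma> p q) \<le> 0" using assms(6)
      by (metis le_less_trans less_eq_real_def mult_less_cancel_right2 not_le)
    then have "\<not> 0 < \<sigma> p q" using Gpos by force
    then show ?thesis using nn[OF that(1,2)] zr[OF that(1,2)] by linarith
  qed
  obtain a where a: "a \<in> X" using ne by auto
  define x where "x n = (f ^^ n) (f a)" for n
  have xY: "x n \<in> Y" for n
  proof (induction n)
    case 0 then show ?case using a assms(2) by (auto simp: x_def)
  next
    case (Suc n) then show ?case using assms(2,3) by (auto simp: x_def)
  qed
  have xX: "x n \<in> X" for n using xY assms(3) by auto
  have xS: "x (Suc n) = f (x n)" for n by (simp add: x_def)
  define d where "d n m = \<sigma> (x n) (x m)" for n m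
  have dnn: "0 \<le> d n m" for n m using nn xX by (simp add: d_def)
  have dsy: "d n m = d m n" for n m using sy xX by (simp add: d_def)
  have dtr: "d n m \<le> d n j + d j m" for n m j using tr xX by (simp add: d_def)
  have dc: "G (d (Suc n) (Suc m)) \<le> k * G (d n m)" for n m
    using contr xX xS by (simp add: d_def)
  have sb: "G (d n (Suc n)) \<le> k^n * G (d 0 1)" for n
  proof (induction n)
    case 0 then show ?case by simp
  next
    case (Suc n)
    have "G (d (Suc n) (Suc (Suc n))) \<le> k * G (d n (Suc n))" by (rule dc)
    also have "\<dots> \<le> k * (k^n * G (d 0 1))" by (rule mult_left_mono[OF Suc assms(5)])
    finally show ?case by simp
  qed
  have lim1: "(\<lambda>n. k^n * G (d 0 1)) \<longlonglongrightarrow> 0"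
    by (intro tendsto_mult_left_zero LIMSEQ_power_zero) (use assms(5,6) in simp)
  have pos1: "\<forall>n. 0 \<le> G (d n (Suc n))" using Gnn dnn by blast
  have "(\<lambda>n. G (d n (Suc n))) \<longlonglongrightarrow> 0"
  proof (rule tendsto_sandwich[of "\<lambda>_. 0" _ _ "\<lambda>n. k^n * G (d 0 1)"])
    show "\<forall>\<^sub>F n in sequentially. (0::real) \<le> G (d n (Suc n))" using pos1 by (simp add: always_eventually)
    show "\<forall>\<^sub>F n in sequentially. G (d n (Suc n)) \<le> k^n * G (d 0 1)" using sb by (simp add: always_eventually)
  qed (rule tendsto_const, rule lim1)
  then have "(\<lambda>n. integral {0..d n (Suc n)} \<rho>) \<longlonglongrightarrow> 0" by (simp only: G_def)
  then have s0: "(\<lambda>n. d n (Suc n)) \<longlonglongrightarrow> 0"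
    by (rule om_to0[OF om, rotated]) (simp add: dnn)
  have cau: "\<exists>N. \<forall>n\<ge>N. \<forall>m\<ge>N. d n m < e" if e: "e > 0" for e
  proof (rule ccontr)
    assume H: "\<not> ?thesis"
    have Ge: "0 < G e" using Gpos e .
    define \<eta> where "\<eta> = (1 - k) * G e / 3"
    have eta: "0 < \<eta>" using Ge assms(6) by (simp add: \<eta>_def)
    have c: "continuous_on {0..e+1} G"
      using indefinite_integral_continuous_1 om_int[OF om, of "e+1"] e unfolding G_def by auto
    obtain \<delta>0 where d0: "\<delta>0 > 0" "\<And>t. t \<in> {0..e+1} \<Longrightarrow> dist t e < \<delta>0 \<Longrightarrow> dist (G t) (G e) < \<eta>"
      using c eta e unfolding continuous_on_iff by (metis atLeastAtMost_iff less_add_one less_eq_real_def)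
    define \<delta> where "\<delta> = min (\<delta>0/3) (min (e/3) (1/3))"
    have dl: "0 < \<delta>" "\<delta> \<le> \<delta>0/3" "\<delta> \<le> e/3" "\<delta> \<le> 1/3" using d0 e by (auto simp: \<delta>_def)
    have G1: "\<bar>G (e - 2*\<delta>) - G e\<bar> < \<eta>" using d0(2)[of "e - 2*\<delta>"] dl by (auto simp: dist_real_def)
    have G2: "\<bar>G (e + \<delta>) - G e\<bar> < \<eta>" using d0(2)[of "e + \<delta>"] dl by (auto simp: dist_real_def)
    obtain N where N: "\<And>j. j \<ge> N \<Longrightarrow> d j (Suc j) < \<delta>"
      using order_tendstoD(2)[OF s0 dl(1)] unfolding eventually_sequentially by auto
    from H obtain n0 m0 where nm0: "n0 \<ge> N" "m0 \<ge> N" "e \<le> d n0 m0" by force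
    have "\<exists>n m. N \<le> n \<and> n < m \<and> e \<le> d n m"
    proof (cases n0 m0 rule: linorder_cases)
      case less then show ?thesis using nm0 by blast
    next
      case greater then show ?thesis using nm0 dsy by metis
    next
      case equal
      have "d n0 n0 \<le> d n0 (Suc n0) + d (Suc n0) n0" by (rule dtr)
      also have "\<dots> < 2 * \<delta>" using N[OF nm0(1)] dsy[of "Suc n0" n0] by simp
      finally show ?thesis using nm0 equal dl by simp
    qed
    then obtain n m where nm: "N \<le> n" "n < m" "e \<le> d n m" by blast
    define m' where "m' = (LEAST j. n < j \<and> e \<le> d n j)"
    have m'1: "n < m' \<and> e \<le> d n m'" unfolding m'_def by (rule LeastI[of _ m]) (use nm in auto)
    have m'2: "d n j < e" if "n < j" "j < m'" for j
      using not_less_Least[of j "\<lambda>j. n < j \<and> e \<le> d n j"] that unfolding m'_def[symmetric] by auto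
    have "m' \<noteq> Suc n" using m'1 N[OF nm(1)] dl by auto
    then obtain q where q: "m' = Suc q" "n < q" using m'1 by (cases m') auto
    have "d q (Suc q) < \<delta>" using N q nm by auto
    then have up: "d n m' < e + \<delta>" using dtr[of n m' q] m'2[of q] q by simp
    have "d n m' \<le> d n (Suc n) + d (Suc n) m'" by (rule dtr)
    also have "d (Suc n) m' \<le> d (Suc n) (Suc m') + d (Suc m') m'" by (rule dtr)
    finally have "d n m' \<le> d n (Suc n) + d (Suc n) (Suc m') + d m' (Suc m')" using dsy[of "Suc m'" m'] by simp
    moreover have "d n (Suc n) < \<delta>" "d m' (Suc m') < \<delta>" using N nm m'1 by auto
    ultimately have lo: "e - 2*\<delta> \<le> d (Suc n) (Suc m')" using m'1 by linarith
    have "G (e - 2*\<delta>) \<le> G (d (Suc n) (Suc m'))" using lo dl by (intro Gmono) auto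
    also have "\<dots> \<le> k * G (d n m')" by (rule dc)
    also have "\<dots> \<le> k * G (e + \<delta>)" using up dnn assms(5) by (intro mult_left_mono Gmono) auto
    finally have ineq: "G (e - 2*\<delta>) \<le> k * G (e + \<delta>)" .
    have "k * G (e + \<delta>) \<le> k * (G e + \<eta>)" using G2 assms(5) by (intro mult_left_mono) auto
    with ineq G1 have "G e - \<eta> < k * G e + k * \<eta>" by (simp add: algebra_simps)
    moreover have "k * \<eta> \<le> \<eta>" using eta assms(6) by simp
    ultimately have "G e - k * G e < 3 * \<eta>" using eta by linarith
    then have "(1 - k) * G e < 3 * \<eta>" by (simp add: left_diff_distrib)
    then show False by (simp add: \<eta>_def)
  qed
  have dlim: "((\<lambda>(n,m). d n m) \<longlongrightarrow> 0) (sequentially \<times>\<^sub>F sequentially)"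
  proof (rule tendstoI)
    fix e :: real assume "e > 0"
    then obtain N where N: "\<forall>n\<ge>N. \<forall>m\<ge>N. d n m < e" using cau by blast
    show "\<forall>\<^sub>F p in sequentially \<times>\<^sub>F sequentially. dist ((\<lambda>(n,m). d n m) p) 0 < e"
      unfolding eventually_prod_sequentially using N dnn by (auto simp: dist_real_def)
  qed
  have "ml_cauchy \<sigma> x" unfolding ml_cauchy_def using dlim unfolding d_def by blast
  then obtain p where p: "p \<in> Y" "((\<lambda>(n,m). \<sigma> (x n) (x m)) \<longlongrightarrow> \<sigma> p p) (sequentially \<times>\<^sub>F sequentially)"
    "(\<lambda>n. \<sigma> (x n) p) \<longlonglongrightarrow> \<sigma> p p"
    using assms(4) xY unfolding ml_complete_def by blast
  have "\<sigma> p p = 0"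
    using tendsto_unique[OF _ p(2) dlim[unfolded d_def]] by (simp add: prod_filter_eq_bot)
  with p have xp: "(\<lambda>n. \<sigma> (x n) p) \<longlonglongrightarrow> 0" by simp
  have pX: "p \<in> X" using p assms(3) by auto
  have "(\<lambda>n. G (\<sigma> (x n) p)) \<longlonglongrightarrow> G 0"
    unfolding G_def using om_cont[OF om xp] nn xX pX by auto
  then have lim2: "(\<lambda>n. k * G (\<sigma> (x n) p)) \<longlonglongrightarrow> 0" using G0 tendsto_mult_right_zero by auto
  have "(\<lambda>n. G (\<sigma> (x (Suc n)) (f p))) \<longlonglongrightarrow> 0"
  proof (rule tendsto_sandwich[of "\<lambda>_. 0" _ _ "\<lambda>n. k * G (\<sigma> (x n) p)"])
    show "\<forall>\<^sub>F n in sequentially. (0::real) \<le> G (\<sigma> (x (Suc n)) (f p))"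
      using Gnn nn xX fX pX by (simp add: always_eventually)
    show "\<forall>\<^sub>F n in sequentially. G (\<sigma> (x (Suc n)) (f p)) \<le> k * G (\<sigma> (x n) p)"
      using contr xX pX xS by (simp add: always_eventually)
  qed (rule tendsto_const, rule lim2)
  then have l1: "(\<lambda>n. \<sigma> (x (Suc n)) (f p)) \<longlonglongrightarrow> 0"
    using om_to0[OF om, of "\<lambda>n. \<sigma> (x (Suc n)) (f p)"] nn xX fX pX unfolding G_def by auto
  have l2: "(\<lambda>n. \<sigma> p (x (Suc n))) \<longlonglongrightarrow> 0"
    using LIMSEQ_Suc[OF xp] sy xX pX by simp
  have "(\<lambda>n. \<sigma> p (x (Suc n)) + \<sigma> (x (Suc n)) (f p)) \<longlonglongrightarrow> 0"
    using tendsto_add[OF l2 l1] by simp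
  moreover have "\<forall>n. \<sigma> p (f p) \<le> \<sigma> p (x (Suc n)) + \<sigma> (x (Suc n)) (f p)"
    using tr pX fX xX by auto
  ultimately have "\<sigma> p (f p) \<le> 0"
    by (intro tendsto_le[OF trivial_limit_sequentially _ tendsto_const]) auto
  then have "f p = p" using nn[OF pX fX[OF pX]] zr[OF pX fX[OF pX]] by simp
  then show ?thesis using pX uniq by blast
qed

end
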